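(* Let $\mathbf A\in\mathbb R^{m\times n}$ be a nonzero matrix with rank $r$ and nonzero singular values $\sigma_1(\mathbf A)\ge\cdots\ge\sigma_r(\mathbf A)>0$, and let $\mathbf b\in\mathbb R^m$ be such that the linear system $\mathbf A\mathbf x=\mathbf b$ is consistent (i.e. $\mathbf b$ lies in the column space of $\mathbf A$). Fix any row partition, any column partition, any step size $\alpha>0$, and any initial vector $\mathbf x^0\in\mathbb R^n$, and let $\mathbf x^k$ denote the $k$th iterate of the doubly stochastic block Gauss--Seidel (DSBGS) algorithm described in the context. Let $\mathbf x^0_\star:=(\mathbf I-\mathbf A^\dagger\mathbf A)\mathbf x^0+\mathbf A^\dagger\mathbf b$, which is the orthogonal projection of $\mathbf x^0$ onto the solution set $\{\mathbf x\in\mathbb R^n:\mathbf A\mathbf x=\mathbf b\}$. Then for every $k\ge 0$, $$\big\|\mathbb E[\mathbf x^k-\mathbf x^0_\star]\big\|_2\le\Big(\max_{1\le i\le r}\Big|1-\frac{\alpha\sigma_i^2(\mathbf A)}{\|\mathbf A\|_F^2}\Big|\Big)^k\|\mathbf x^0-\mathbf x^0_\star\|_2 .$$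
   Context: Notation: $\mathbf A^\dagger$ is the Moore--Penrose pseudoinverse, $\|\cdot\|_F$ the Frobenius norm, $\|\cdot\|_2$ the Euclidean norm (spectral norm for matrices). For $\mathcal I\subseteq[m]=\{1,\dots,m\}$ and $\mathcal J\subseteq[n]$, $\mathbf A_{\mathcal I,\mathcal J}$ is the submatrix of $\mathbf A$ with rows indexed by $\mathcal I$ and columns indexed by $\mathcal J$; $\mathbf A_{:,\mathcal J}$ is the column submatrix indexed by $\mathcal J$; $\mathbf I_{:,\mathcal J}$ denotes the columns of the identity matrix (of the appropriate order) indexed by $\mathcal J$. DSBGS algorithm: Let $\{\mathcal I_1,\dots,\mathcal I_s\}$ be a partition of $[m]$ into nonempty pairwise disjoint sets and $\{\mathcal J_1,\dots,\mathcal J_t\}$ a partition of $[n]$ into nonempty pairwise disjoint sets; let $\mathcal P=\{\mathcal I_1,\dots,\mathcal I_s\}\times\{\mathcal J_1,\dots,\mathcal J_t\}$. Given $\alpha>0$ and $\mathbf x^0\in\mathbb R^n$, for $k=1,2,\dots$: pick $(\mathcal I,\mathcal J)\in\mathcal P$ (independently of the previous choices) with probability $\|\mathbf A_{\mathcal I,\mathcal J}\|_F^2/\|\mathbf A\|_F^2$, and set $$\mathbf x^k=\mathbf x^{k-1}-\alpha\,\frac{\mathbf I_{:,\mathcal J}(\mathbf A_{\mathcal I,\mathcal J})^{T}(\mathbf I_{:,\mathcal I})^{T}}{\|\mathbf A_{\mathcal I,\mathcal J}\|_F^2}\,(\mathbf A\mathbf x^{k-1}-\mathbf b).$$ The expectation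 $\mathbb E$ is over the random choices of the blocks. *)

theory Defs
  imports "HOL-Probability.Probability"
begin

text \<open>Frobenius norm of an m x n real matrix (rows indexed by 'm, columns by 'n).\<close>
definition frob_norm :: "real^'n^'m \<Rightarrow> real" where
  "frob_norm A = sqrt (\<Sum>i\<in>UNIV. \<Sum>j\<in>UNIV. (A$i$j)^2)"

text \<open>Squared Frobenius norm of the submatrix A_{I,J}.\<close>
definition block_frob2 :: "real^'n^'m \<Rightarrow> 'm set \<Rightarrow> 'n set \<Rightarrow> real" where
  "block_frob2 A I J = (\<Sum>i\<in>I. \<Sum>j\<in>J. (A$i$j)^2)"

text \<open>Moore--Penrose pseudoinverse: the unique matrix satisfying the four Penrose equations.\<close>
definition pinv :: "real^'n^'m \<Rightarrow> real^'m^'n" where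
  "pinv A = (THE X. A ** X ** A = A \<and> X ** A ** X = X \<and>
                    transpose (A ** X) = A ** X \<and> transpose (X ** A) = X ** A)"

text \<open>Eigenvalue of a square real matrix.\<close>
definition is_eigenvalue :: "real^'n^'n \<Rightarrow> real \<Rightarrow> bool" where
  "is_eigenvalue M c \<longleftrightarrow> (\<exists>v. v \<noteq> 0 \<and> M *v v = c *\<^sub>R v)"

text \<open>Nonzero singular values: positive square roots of positive eigenvalues of A^T A.\<close>
definition nonzero_singular_values :: "real^'n^'m \<Rightarrow> real set" where
  "nonzero_singular_values A = {\<sigma>. \<sigma> > 0 \<and> is_eigenvalue (transpose A ** A) (\<sigma>^2)}"

text \<open>One DSBGS update with block (I,J):
  x - alpha * I_{:,J} (A_{I,J})^T (I_{:,I})^T (A x - b) / ||A_{I,J}||_F^2.\<close>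
definition dsbgs_step :: "real^'n^'m \<Rightarrow> real^'m \<Rightarrow> real \<Rightarrow> real^'n \<Rightarrow> 'm set \<Rightarrow> 'n set \<Rightarrow> real^'n" where
  "dsbgs_step A b \<alpha> x I J =
     (\<chi> j. x$j - (if j \<in> J then \<alpha> * (\<Sum>i\<in>I. A$i$j * ((A *v x - b)$i)) / block_frob2 A I J else 0))"

text \<open>Distribution of the block choice: (I,J) in RP x CP with probability ||A_{I,J}||_F^2/||A||_F^2.\<close>
definition block_pmf :: "real^'n^'m \<Rightarrow> 'm set set \<Rightarrow> 'n set set \<Rightarrow> ('m set \<times> 'n set) pmf" where
  "block_pmf A RP CP = embed_pmf (\<lambda>(I,J). if I \<in> RP \<and> J \<in> CP
        then block_frob2 A I J / (frob_norm A)^2 else 0)"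

text \<open>Distribution of the k-th DSBGS iterate x^k (block choices independent across iterations).\<close>
fun dsbgs_dist :: "real^'n^'m \<Rightarrow> real^'m \<Rightarrow> 'm set set \<Rightarrow> 'n set set \<Rightarrow> real \<Rightarrow> real^'n \<Rightarrow> nat \<Rightarrow> (real^'n) pmf" where
  "dsbgs_dist A b RP CP \<alpha> x0 0 = return_pmf x0"
| "dsbgs_dist A b RP CP \<alpha> x0 (Suc k) =
     bind_pmf (dsbgs_dist A b RP CP \<alpha> x0 k)
       (\<lambda>x. map_pmf (\<lambda>(I,J). dsbgs_step A b \<alpha> x I J) (block_pmf A RP CP))"

end

theory Submission
  imports Defs
begin

lemma adj: "((A::real^'n^'m) *v x) \<bullet> y = x \<bullet> (transpose A *v y)"
  by (metis dot_lmul_matrix vector_transpose_matrix)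

lemma proj_exists:
  fixes S :: "(real^'k) set"
  assumes "subspace S"
  shows "\<exists>P::real^'k^'k. transpose P = P \<and> (\<forall>x. P *v x \<in> S) \<and> (\<forall>x\<in>S. P *v x = x)
          \<and> (\<forall>x. \<forall>y\<in>S. (x - P *v x) \<bullet> y = 0)"
proof -
  obtain B where B: "B \<subseteq> S" "pairwise orthogonal B" "\<And>x. x \<in> B \<Longrightarrow> norm x = 1"
     "independent B" "span B = S"
    using orthonormal_basis_subspace[OF assms] by metis
  have fB: "finite B" using B(4) independent_imp_finite by blast
  define P :: "real^'k^'k" where "P = (\<chi> i j. \<Sum>b\<in>B. b$i * b$j)"
  have Pv: "P *v x = (\<Sum>b\<in>B. (b \<bullet> x) *\<^sub>R b)" for x
    by (simp add: P_def vec_eq_iff matrix_vector_mult_def inner_vec_def sum_component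
        sum_distrib_left sum_distrib_right sum.swap[of _ B] mult_ac)
  have sym: "transpose P = P" by (simp add: P_def transpose_def vec_eq_iff mult.commute)
  have inS: "P *v x \<in> S" for x
    unfolding Pv B(5)[symmetric] by (intro span_sum span_scale span_base)
  have orthB: "(x - P *v x) \<bullet> c = 0" if "c \<in> B" for x c
  proof -
    have "(P *v x) \<bullet> c = (\<Sum>b\<in>B. (b \<bullet> x) * (b \<bullet> c))"
      by (simp add: Pv inner_sum_left)
    also have "\<dots> = (\<Sum>b\<in>B. if b = c then (c \<bullet> x) else 0)"
    proof (rule sum.cong[OF refl])
      fix b assume "b \<in> B"
      show "(b \<bullet> x) * (b \<bullet> c) = (if b = c then (c \<bullet> x) else 0)"
      proof (cases "b = c")
        case True
        have "c \<bullet> c = 1" using B(3)[OF that] by (simp add: norm_eq_1)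
        then show ?thesis using True by simp
      next
        case False
        then have "b \<bullet> c = 0" using B(2) \<open>b \<in> B\<close> that
          by (auto simp: pairwise_def orthogonal_def)
        then show ?thesis using False by simp
      qed
    qed
    also have "\<dots> = c \<bullet> x" using that fB by simp
    finally show ?thesis by (simp add: inner_diff_left inner_commute[of x c])
  qed
  have orth: "(x - P *v x) \<bullet> y = 0" if "y \<in> S" for x y
  proof -
    have "orthogonal (x - P *v x) y"
      by (rule orthogonal_to_span[of y B]) (use that B(5) orthB in \<open>auto simp: orthogonal_def\<close>)
    then show ?thesis by (simp add: orthogonal_def)
  qed
  have fixP: "P *v x = x" if "x \<in> S" for x
  proof -
    have "x - P *v x \<in> S" using that inS assms by (simp add: subspace_diff)
    then have "(x - P *v x) \<bullet> (x - P *v x) = 0" using orth by blast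
    then show ?thesis by simp
  qed
  show ?thesis using sym inS fixP orth by blast
qed


lemma subV: "subspace (range (\<lambda>y. transpose (A::real^'n^'m) *v y))"
unfolding subspace_def
proof (intro conjI ballI allI)
  show "0 \<in> range (\<lambda>y. transpose A *v y)" by (metis matrix_vector_mult_0_right rangeI)
next
  fix x y assume "x \<in> range (\<lambda>y. transpose A *v y)" "y \<in> range (\<lambda>y. transpose A *v y)"
  then obtain a c where "x = transpose A *v a" "y = transpose A *v c" by blast
  then have "x + y = transpose A *v (a + c)" by (simp add: matrix_vector_right_distrib)
  then show "x + y \<in> range (\<lambda>y. transpose A *v y)" by blast
next
  fix r and x :: "real^'n" assume "x \<in> range (\<lambda>y. transpose A *v y)"
  then obtain a where "x = transpose A *v a" by blast
  then have "r *\<^sub>R x = transpose A *v (r *\<^sub>R a)" by (simp add: matrix_vector_mult_scaleR)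
  then show "r *\<^sub>R x \<in> range (\<lambda>y. transpose A *v y)" by blast
qed

definition penrose :: "real^'n^'m \<Rightarrow> real^'m^'n \<Rightarrow> bool" where
  "penrose A X \<longleftrightarrow> A ** X ** A = A \<and> X ** A ** X = X \<and>
                    transpose (A ** X) = A ** X \<and> transpose (X ** A) = X ** A"

lemma penrose_exists: fixes A :: "real^'n^'m" shows "\<exists>X. penrose A X"
proof -
  define V where "V = range (\<lambda>y. transpose A *v y)"
  have subV: "subspace V" unfolding V_def by (rule subV)
  obtain P :: "real^'n^'n" where Psym: "transpose P = P" and PV: "\<And>x. P *v x \<in> V"
    and Pfix: "\<And>x. x \<in> V \<Longrightarrow> P *v x = x" and Porth: "\<And>x y. y \<in> V \<Longrightarrow> (x - P *v x) \<bullet> y = 0"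
    using proj_exists[OF subV] by blast
  have inV: "transpose A *v y \<in> V" for y unfolding V_def by blast
  have PP: "P *v (P *v x) = P *v x" for x using Pfix PV by blast
  have AP: "A *v (P *v x) = A *v x" for x
  proof -
    let ?w = "x - P *v x"
    have "(A *v ?w) \<bullet> (A *v ?w) = ?w \<bullet> (transpose A *v (A *v ?w))" by (rule adj)
    also have "\<dots> = 0" using Porth[OF inV] .
    finally have "A *v ?w = 0" by simp
    then show ?thesis by (simp add: matrix_vector_mult_diff_distrib)
  qed
  define M where "M = transpose A ** A + (mat 1 - P)"
  have Mv: "M *v x = transpose A *v (A *v x) + (x - P *v x)" for x
    by (simp add: M_def matrix_vector_mult_add_rdistrib matrix_vector_mult_diff_rdistrib matrix_vector_mul_assoc)
  have e: "transpose (C + (mat 1 - P)) = transpose C + (mat 1 - transpose P)" for C :: "real^'n^'n"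
    by (simp add: transpose_def vec_eq_iff mat_def)
  have Msym: "transpose M = M"
    unfolding M_def e by (simp add: Psym matrix_transpose_mul)
  have M0: "x = 0" if "M *v x = 0" for x
  proof -
    let ?u = "transpose A *v (A *v x)" and ?w = "x - P *v x"
    have "?u + ?w = 0" using that Mv by simp
    then have "?w = - ?u" by (simp add: eq_neg_iff_add_eq_0 add.commute)
    moreover have "?w \<bullet> ?u = 0" using Porth[OF inV] by blast
    ultimately have "?w \<bullet> ?w = 0" by (simp add: inner_minus_right)
    then have w0: "?w = 0" by simp
    then have "?u = 0" using \<open>?u + ?w = 0\<close> by simp
    then have "(A *v x) \<bullet> (A *v x) = 0" by (simp add: adj)
    then have Ax: "A *v x = 0" by simp
    have "x \<in> V" using w0 PV[of x] by simp
    then obtain y where y: "x = transpose A *v y" unfolding V_def by blast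
    have "x \<bullet> x = (A *v x) \<bullet> y" using y adj by metis
    then show ?thesis using Ax by simp
  qed
  have "inj ((*v) M)"
  proof (rule injI)
    fix x y assume "M *v x = M *v y"
    then have "M *v (x - y) = 0" by (simp add: matrix_vector_mult_diff_distrib)
    then show "x = y" using M0 by fastforce
  qed
  then obtain B where BM: "B ** M = mat 1" using matrix_left_invertible_injective by blast
  then have MB: "M ** B = mat 1" using matrix_left_right_inverse by blast
  have "transpose B ** M = mat 1"
    using arg_cong[OF MB, of transpose] by (simp add: matrix_transpose_mul Msym)
  then have Bsym: "transpose B = B"
    by (metis BM MB matrix_mul_assoc matrix_mul_lid matrix_mul_rid)
  define X where "X = B ** transpose A"
  have MP: "M ** P = transpose A ** A"
    by (simp add: matrix_eq Mv PP AP flip: matrix_vector_mul_assoc)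
  have XA: "X ** A = P"
  proof -
    have "X ** A = B ** (M ** P)" by (simp add: X_def MP matrix_mul_assoc)
    also have "\<dots> = P" by (simp add: matrix_mul_assoc BM)
    finally show ?thesis .
  qed
  have AXA: "A ** X ** A = A"
    by (simp add: XA matrix_eq AP flip: matrix_mul_assoc matrix_vector_mul_assoc)
  have AXsym: "transpose (A ** X) = A ** X"
    by (simp add: X_def matrix_transpose_mul Bsym matrix_mul_assoc)
  have "transpose A = transpose (A ** X ** A)" using AXA by simp
  also have "\<dots> = transpose A ** transpose (A ** X)" by (rule matrix_transpose_mul)
  finally have AtAX: "transpose A ** (A ** X) = transpose A" using AXsym by simp
  have MX: "M ** X = transpose A" by (simp add: X_def matrix_mul_assoc MB)
  have "P ** X = X"
  proof -
    have "P ** X = B ** (M ** P) ** X" by (simp add: matrix_mul_assoc BM)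
    also have "\<dots> = B ** (transpose A ** (A ** X))" by (simp add: MP matrix_mul_assoc)
    also have "\<dots> = X" by (subst AtAX) (simp add: X_def)
    finally show ?thesis .
  qed
  then have XAX: "X ** A ** X = X" by (simp add: XA)
  show ?thesis unfolding penrose_def using AXA XAX AXsym XA Psym by auto
qed

lemma penrose_unique:
  assumes "penrose A X" "penrose A Y" shows "X = Y"
proof -
  have a: "A ** X ** A = A" "X ** A ** X = X" "transpose (A ** X) = A ** X" "transpose (X ** A) = X ** A"
    and b: "A ** Y ** A = A" "Y ** A ** Y = Y" "transpose (A ** Y) = A ** Y" "transpose (Y ** A) = Y ** A"
    using assms unfolding penrose_def by auto
  have "transpose A = transpose (A ** Y ** A)" using b(1) by simp
  also have "\<dots> = transpose A ** transpose (A ** Y)" by (rule matrix_transpose_mul)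
  finally have t1: "transpose A = transpose A ** (A ** Y)" using b(3) by simp
  have t2: "transpose A = (X ** A) ** transpose A"
    using arg_cong[OF a(1), of transpose] a(4) by (simp add: matrix_transpose_mul matrix_mul_assoc)
  have "X = X ** transpose (A ** X)" using a(2) a(3) by (simp add: matrix_mul_assoc)
  also have "\<dots> = X ** transpose X ** transpose A" by (simp add: matrix_transpose_mul matrix_mul_assoc)
  also have "\<dots> = X ** transpose X ** transpose A ** (A ** Y)" by (metis t1 matrix_mul_assoc)
  also have "\<dots> = X ** transpose (A ** X) ** A ** Y" by (simp add: matrix_transpose_mul matrix_mul_assoc)
  also have "\<dots> = X ** A ** Y" using a(2) a(3) by (simp add: matrix_mul_assoc)
  finally have X: "X = X ** A ** Y" .
  have "Y = transpose (Y ** A) ** Y" using b(2) b(4) by (simp add: matrix_mul_assoc)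
  also have "\<dots> = transpose A ** transpose Y ** Y" by (simp add: matrix_transpose_mul matrix_mul_assoc)
  also have "\<dots> = (X ** A) ** transpose A ** transpose Y ** Y" by (metis t2)
  also have "\<dots> = X ** A ** transpose (Y ** A) ** Y" by (simp add: matrix_transpose_mul matrix_mul_assoc)
  also have "\<dots> = X ** A ** (Y ** A ** Y)" using b(4) by (simp add: matrix_mul_assoc)
  also have "\<dots> = X ** A ** Y" using b(2) by simp
  finally show ?thesis using X by simp
qed

lemma pinv_penrose: "penrose A (pinv A)"
proof -
  obtain X where "penrose A X" using penrose_exists by blast
  then have "\<exists>!X. penrose A X" using penrose_unique by blast
  then show ?thesis unfolding pinv_def penrose_def[symmetric] by (rule theI')
qed

lemma eig_finite:
  fixes M :: "real^'n^'n" assumes sym: "transpose M = M"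
  shows "finite {c. is_eigenvalue M c}"
proof -
  let ?E = "{c. is_eigenvalue M c}"
  define v where "v c = (SOME v. v \<noteq> 0 \<and> M *v v = c *\<^sub>R v)" for c
  have v: "v c \<noteq> 0 \<and> M *v v c = c *\<^sub>R v c" if "c \<in> ?E" for c
    using that unfolding v_def is_eigenvalue_def by (metis (mono_tags, lifting) mem_Collect_eq someI_ex)
  have inj: "inj_on v ?E"
  proof (rule inj_onI)
    fix c d assume c: "c \<in> ?E" and d: "d \<in> ?E" and e: "v c = v d"
    then have "c *\<^sub>R v c = d *\<^sub>R v c" using v[OF c] v[OF d] by metis
    then show "c = d" using v[OF c] by (simp add: scaleR_cancel_right)
  qed
  have orth: "pairwise orthogonal (v ` ?E)"
  proof (rule pairwiseI)
    fix x y assume "x \<in> v ` ?E" "y \<in> v ` ?E" "x \<noteq> y"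
    then obtain c d where c: "c \<in> ?E" and d: "d \<in> ?E" and xy: "x = v c" "y = v d" and ne: "v c \<noteq> v d"
      by blast
    then have cd: "c \<noteq> d" by blast
    show "orthogonal x y" unfolding xy orthogonal_def
    proof -
    have "c * (v c \<bullet> v d) = (M *v v c) \<bullet> v d" using v[OF c] by simp
    also have "\<dots> = v c \<bullet> (M *v v d)" using adj[of M "v c" "v d"] sym by simp
    also have "\<dots> = d * (v c \<bullet> v d)" using v[OF d] by simp
    finally have "(c - d) * (v c \<bullet> v d) = 0" by (simp add: algebra_simps)
    then show "v c \<bullet> v d = 0" using cd by simp
  qed
  qed
  have "0 \<notin> v ` ?E" using v by auto
  then have "independent (v ` ?E)" using orth pairwise_orthogonal_independent by blast
  then have "finite (v ` ?E)" using independent_imp_finite by blast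
  then show ?thesis using finite_imageD inj by blast
qed

lemma sv_finite: "finite (nonzero_singular_values (A::real^'n^'m))"
proof -
  have sym: "transpose (transpose A ** A) = transpose A ** A" by (simp add: matrix_transpose_mul)
  have "(\<lambda>s. s^2) ` nonzero_singular_values A \<subseteq> {c. is_eigenvalue (transpose A ** A) c}"
    unfolding nonzero_singular_values_def by auto
  then have "finite ((\<lambda>s. s^2) ` nonzero_singular_values A)"
    using eig_finite[OF sym] finite_subset by blast
  moreover have "inj_on (\<lambda>s::real. s^2) (nonzero_singular_values A)"
    unfolding nonzero_singular_values_def by (auto intro!: inj_onI simp: power2_eq_iff_nonneg)
  ultimately show ?thesis using finite_imageD by blast
qed

lemma quad_zero:
  fixes a c :: real
  assumes "\<And>t. 2*t*a + t^2*c \<le> 0" "a \<ge> 0"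
  shows "a = 0"
proof -
  define d where "d = \<bar>c\<bar> + 1"
  have d: "d > 0" "2*d + c > 0" unfolding d_def by auto
  have "2*(a/d)*a + (a/d)^2*c \<le> 0" by (rule assms(1))
  then have "(2*(a/d)*a + (a/d)^2*c) * d^2 \<le> 0" using d by (simp add: mult_nonpos_nonneg)
  moreover have "(2*(a/d)*a + (a/d)^2*c) * d^2 = a^2 * (2*d + c)"
    using d by (simp add: field_simps power2_eq_square)
  ultimately have "a^2 * (2*d+c) \<le> 0" by simp
  then have "a^2 \<le> 0" using d by (simp add: mult_le_0_iff)
  then show ?thesis by simp
qed

lemma key_bound:
  fixes A :: "real^'n^'m" and \<gamma> :: real
  assumes g: "\<gamma> \<noteq> 0" and ne: "\<exists>v\<in>range (\<lambda>y. transpose A *v y). v \<noteq> 0"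
  shows "\<exists>\<sigma>\<in>nonzero_singular_values A. \<forall>v\<in>range (\<lambda>y. transpose A *v y).
           norm (v - \<gamma> *\<^sub>R (transpose A *v (A *v v))) \<le> \<bar>1 - \<gamma> * \<sigma>^2\<bar> * norm v"
proof -
  define V where "V = range (\<lambda>y. transpose A *v y)"
  define N where "N = transpose A ** A"
  define T where "T v = v - \<gamma> *\<^sub>R (N *v v)" for v
  have Tdef: "v - \<gamma> *\<^sub>R (transpose A *v (A *v v)) = T v" for v
    by (simp add: T_def N_def matrix_vector_mul_assoc)
  have sV: "subspace V" unfolding V_def by (rule subV)
  have inV: "transpose A *v y \<in> V" for y unfolding V_def by blast
  have TV: "T v \<in> V" if "v \<in> V" for v
    unfolding T_def N_def using that inV
    by (metis matrix_vector_mul_assoc sV subspace_diff subspace_scale)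
  have Tlin: "T (x + y) = T x + T y" "T (r *\<^sub>R x) = r *\<^sub>R T x" for x y r
    by (auto simp: T_def algebra_simps)
  have Tsym: "T x \<bullet> y = x \<bullet> T y" for x y
  proof -
    have "(N *v x) \<bullet> y = x \<bullet> (N *v y)"
      using adj[of N x y] by (simp add: N_def matrix_transpose_mul)
    then show ?thesis by (simp add: T_def inner_diff_left inner_diff_right)
  qed
  define K where "K = V \<inter> sphere 0 1"
  have cK: "compact K" unfolding K_def using closed_subspace[OF sV] by (intro closed_Int_compact) auto
  obtain v0 where v0: "v0 \<in> V" "v0 \<noteq> 0" using ne V_def by blast
  have "(1 / norm v0) *\<^sub>R v0 \<in> K" using v0 sV unfolding K_def by (auto simp: subspace_scale)
  then have neK: "K \<noteq> {}" by blast
  have cont: "continuous_on K (\<lambda>v. norm (T v))"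
    unfolding T_def by (intro continuous_intros linear_continuous_on matrix_vector_mul_bounded_linear)
  obtain u where u: "u \<in> K" and umax: "\<And>v. v \<in> K \<Longrightarrow> norm (T v) \<le> norm (T u)"
    using continuous_attains_sup[OF cK neK cont] by blast
  define m where "m = norm (T u)"
  have uV: "u \<in> V" and un: "norm u = 1" using u unfolding K_def by auto
  have bound: "norm (T v) \<le> m * norm v" if "v \<in> V" for v
  proof (cases "v = 0")
    case True then show ?thesis using Tlin(2)[of 0 0] by simp
  next
    case False
    have "(1 / norm v) *\<^sub>R v \<in> K" using that False sV unfolding K_def by (auto simp: subspace_scale)
    then have "norm (T ((1 / norm v) *\<^sub>R v)) \<le> m" using umax m_def by blast
    then have "norm (T v) / norm v \<le> m" using Tlin(2) by simp
    then show ?thesis using False by (simp add: divide_le_eq mult.commute)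
  qed
  define z where "z = T (T u) - m^2 *\<^sub>R u"
  have zV: "z \<in> V" unfolding z_def using TV uV sV by (simp add: subspace_diff subspace_scale)
  have uu: "u \<bullet> u = 1" using un by (simp add: norm_eq_1)
  have TuTu: "T u \<bullet> T u = m^2" unfolding m_def by (simp add: power2_norm_eq_inner)
  have "2*t*(z \<bullet> z) + t^2*(T z \<bullet> T z - m^2 * (z \<bullet> z)) \<le> 0" for t
  proof -
    have "u + t *\<^sub>R z \<in> V" using uV zV sV by (simp add: subspace_add subspace_scale)
    then have "norm (T (u + t *\<^sub>R z)) ^ 2 \<le> (m * norm (u + t *\<^sub>R z))^2"
      using bound by (simp add: power_mono)
    then have le: "T (u + t *\<^sub>R z) \<bullet> T (u + t *\<^sub>R z) \<le> m^2 * ((u + t *\<^sub>R z) \<bullet> (u + t *\<^sub>R z))"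
      by (simp add: power2_norm_eq_inner power_mult_distrib)
    have e1: "T u \<bullet> T z = (z + m^2 *\<^sub>R u) \<bullet> z" using Tsym[of "T u" z] by (simp add: z_def)
    have "T (u + t *\<^sub>R z) \<bullet> T (u + t *\<^sub>R z) = T u \<bullet> T u + 2*t*(T u \<bullet> T z) + t^2 * (T z \<bullet> T z)"
      by (simp add: Tlin inner_add_left inner_add_right inner_commute power2_eq_square algebra_simps)
    also have "\<dots> = m^2 + 2*t*(z \<bullet> z) + 2*t*m^2*(u \<bullet> z) + t^2 * (T z \<bullet> T z)"
      using e1 TuTu by (simp add: inner_add_left algebra_simps)
    finally have l: "T (u + t *\<^sub>R z) \<bullet> T (u + t *\<^sub>R z) = m^2 + 2*t*(z \<bullet> z) + 2*t*m^2*(u \<bullet> z) + t^2 * (T z \<bullet> T z)" .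
    have r: "(u + t *\<^sub>R z) \<bullet> (u + t *\<^sub>R z) = 1 + 2*t*(u \<bullet> z) + t^2*(z \<bullet> z)"
      using uu by (simp add: inner_add_left inner_add_right inner_commute power2_eq_square algebra_simps)
    show ?thesis using le unfolding l r by (simp add: algebra_simps)
  qed
  then have "z \<bullet> z = 0" by (intro quad_zero) auto
  then have TTu: "T (T u) = m^2 *\<^sub>R u" unfolding z_def by simp
  have "\<exists>w\<in>V. w \<noteq> 0 \<and> (\<exists>l. T w = l *\<^sub>R w \<and> \<bar>l\<bar> = m)"
  proof (cases "T u + m *\<^sub>R u = 0")
    case True
    then have "T u = (-m) *\<^sub>R u" by (simp add: eq_neg_iff_add_eq_0)
    moreover have "u \<noteq> 0" using un by auto
    ultimately show ?thesis using uV m_def by (intro bexI[of _ u] conjI exI[of _ "-m"]) auto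
  next
    case False
    have "T (T u + m *\<^sub>R u) = m *\<^sub>R (T u + m *\<^sub>R u)"
      using TTu by (simp add: Tlin power2_eq_square algebra_simps)
    moreover have "T u + m *\<^sub>R u \<in> V" using TV uV sV by (simp add: subspace_add subspace_scale)
    ultimately show ?thesis using False m_def by (intro bexI[of _ "T u + m *\<^sub>R u"]) auto
  qed
  then obtain w l where wV: "w \<in> V" and w0: "w \<noteq> 0" and Tw: "T w = l *\<^sub>R w" and lm: "\<bar>l\<bar> = m"
    by blast
  define \<mu> where "\<mu> = (1 - l) / \<gamma>"
  have Nw: "N *v w = \<mu> *\<^sub>R w"
  proof -
    have "\<gamma> *\<^sub>R (N *v w) = (1 - l) *\<^sub>R w" using Tw by (simp add: T_def algebra_simps)
    then have "N *v w = (1/\<gamma>) *\<^sub>R ((1 - l) *\<^sub>R w)" using g by (metis scaleR_scaleR divide_self_if mult.commute times_divide_eq_right mult_1_right scaleR_one)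
    then show ?thesis by (simp add: \<mu>_def)
  qed
  have "\<mu> * (w \<bullet> w) = (A *v w) \<bullet> (A *v w)"
    using Nw adj[of A w "A *v w"] by (simp add: N_def matrix_vector_mul_assoc)
  have "\<mu> > 0"
  proof (rule ccontr)
    assume "\<not> \<mu> > 0"
    then have "(A *v w) \<bullet> (A *v w) \<le> 0" using \<open>\<mu> * (w \<bullet> w) = _\<close> by (metis inner_ge_zero mult_nonpos_nonneg not_less)
    then have Aw: "A *v w = 0" by (metis inner_eq_zero_iff inner_ge_zero order_antisym)
    obtain y where "w = transpose A *v y" using wV V_def by blast
    then have "w \<bullet> w = (A *v w) \<bullet> y" using adj by metis
    then show False using Aw w0 by simp
  qed
  define \<sigma> where "\<sigma> = sqrt \<mu>"
  have s2: "\<sigma>^2 = \<mu>" using \<open>\<mu> > 0\<close> by (simp add: \<sigma>_def)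
  have sv: "\<sigma> \<in> nonzero_singular_values A"
    unfolding nonzero_singular_values_def is_eigenvalue_def using \<open>\<mu> > 0\<close> s2 Nw w0
    by (auto simp: \<sigma>_def N_def)
  have "\<bar>1 - \<gamma> * \<sigma>^2\<bar> = m" using s2 g lm by (simp add: \<mu>_def)
  then show ?thesis using sv bound unfolding Tdef V_def by auto
qed

lemma part_sum:
  fixes P :: "'a::finite set set" and g :: "'a \<Rightarrow> real"
  assumes "partition_on UNIV P"
  shows "(\<Sum>I\<in>P. \<Sum>i\<in>I. g i) = (\<Sum>i\<in>UNIV. g i)"
proof -
  have d: "\<forall>A\<in>P. \<forall>B\<in>P. A \<noteq> B \<longrightarrow> A \<inter> B = {}"
    using assms unfolding partition_on_def by (auto dest: disjointD)
  have "(\<Sum>i\<in>\<Union>P. g i) = (\<Sum>I\<in>P. \<Sum>i\<in>I. g i)"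
    using sum.Union_disjoint[OF _ d, of g] by simp
  moreover have "\<Union>P = UNIV" using assms unfolding partition_on_def by simp
  ultimately show ?thesis by simp
qed

lemma blocks_sum:
  fixes RP :: "'m::finite set set" and CP :: "'n::finite set set" and h :: "'m \<Rightarrow> 'n \<Rightarrow> real"
  assumes "partition_on UNIV RP" "partition_on UNIV CP"
  shows "(\<Sum>I\<in>RP. \<Sum>J\<in>CP. \<Sum>i\<in>I. \<Sum>j\<in>J. h i j) = (\<Sum>i\<in>UNIV. \<Sum>j\<in>UNIV. h i j)"
proof -
  have "(\<Sum>J\<in>CP. \<Sum>i\<in>I. \<Sum>j\<in>J. h i j) = (\<Sum>i\<in>I. \<Sum>j\<in>UNIV. h i j)" for I
    by (subst sum.swap) (simp add: part_sum[OF assms(2)])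
  then show ?thesis using part_sum[OF assms(1)] by simp
qed

lemma F2_eq: "(frob_norm A)^2 = (\<Sum>i\<in>UNIV. \<Sum>j\<in>UNIV. (A$i$j)^2)"
  unfolding frob_norm_def by (simp add: sum_nonneg)

lemma F2_pos: assumes "A \<noteq> 0" shows "(frob_norm A)^2 > 0"
proof -
  obtain i j where ij: "A$i$j \<noteq> 0" using assms by (metis vec_eq_iff zero_index)
  have "(\<Sum>j\<in>UNIV. (A$i$j)^2) > 0"
    by (rule sum_pos2[of _ j]) (use ij in auto)
  then have "(\<Sum>i\<in>UNIV. \<Sum>j\<in>UNIV. (A$i$j)^2) > 0"
    by (intro sum_pos2[of _ i]) (auto intro: sum_nonneg)
  then show ?thesis by (simp add: F2_eq)
qed

lemma bf_nonneg: "block_frob2 A I J \<ge> 0"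
  unfolding block_frob2_def by (intro sum_nonneg) auto

lemma block_pmf_pmf:
  fixes A :: "real^'n^'m"
  assumes A: "A \<noteq> 0" and RP: "partition_on UNIV RP" and CP: "partition_on UNIV CP"
  shows "pmf (block_pmf A RP CP) (I,J) = (if I \<in> RP \<and> J \<in> CP then block_frob2 A I J / (frob_norm A)^2 else 0)"
proof -
  define f where "f = (\<lambda>(I,J). if I \<in> RP \<and> J \<in> CP then block_frob2 A I J / (frob_norm A)^2 else 0)"
  have nn: "\<And>x. 0 \<le> f x" unfolding f_def by (auto intro!: divide_nonneg_nonneg bf_nonneg)
  have "(\<Sum>x\<in>UNIV. f x) = (\<Sum>I\<in>UNIV. \<Sum>J\<in>UNIV. f (I,J))"
    by (simp add: sum.cartesian_product flip: UNIV_Times_UNIV)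
  also have "\<dots> = (\<Sum>I\<in>RP. \<Sum>J\<in>CP. block_frob2 A I J / (frob_norm A)^2)"
  proof -
    have i: "(\<Sum>J\<in>UNIV. f (I,J)) = (if I \<in> RP then (\<Sum>J\<in>CP. block_frob2 A I J / (frob_norm A)^2) else 0)" for I
    proof (cases "I \<in> RP")
      case True
      then show ?thesis using sum.inter_restrict[of UNIV "\<lambda>J. block_frob2 A I J / (frob_norm A)^2" CP]
        by (simp add: f_def)
    qed (simp add: f_def)
    show ?thesis unfolding i using sum.inter_restrict[of UNIV "\<lambda>I. (\<Sum>J\<in>CP. block_frob2 A I J / (frob_norm A)^2)" RP]
      by simp
  qed
  also have "\<dots> = (\<Sum>I\<in>RP. \<Sum>J\<in>CP. block_frob2 A I J) / (frob_norm A)^2"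
    by (simp add: sum_divide_distrib)
  also have "\<dots> = 1"
    using F2_pos[OF A] by (simp add: block_frob2_def blocks_sum[OF RP CP] F2_eq)
  finally have s1: "(\<Sum>x\<in>UNIV. f x) = 1" .
  have "(\<integral>\<^sup>+x. ennreal (f x) \<partial>count_space UNIV) = 1"
    by (simp add: nn_integral_count_space_finite sum_ennreal nn s1)
  then have "pmf (embed_pmf f) (I,J) = f (I,J)" using pmf_embed_pmf[of f] nn by blast
  moreover have "block_pmf A RP CP = embed_pmf f" unfolding block_pmf_def f_def ..
  ultimately show ?thesis by (simp add: f_def)
qed

lemma expect_bind:
  fixes f :: "'b \<Rightarrow> real^'n"
  assumes fM: "finite (set_pmf M)" and fN: "\<And>x. x \<in> set_pmf M \<Longrightarrow> finite (set_pmf (N x))"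
  shows "measure_pmf.expectation (bind_pmf M N) f
       = measure_pmf.expectation M (\<lambda>x. measure_pmf.expectation (N x) f)"
proof -
  define S where "S = set_pmf (bind_pmf M N)"
  have fS: "finite S" unfolding S_def using fM fN by simp
  have pb: "pmf (bind_pmf M N) a = (\<Sum>x\<in>set_pmf M. pmf M x * pmf (N x) a)" for a
    unfolding pmf_bind by (subst integral_measure_pmf_real[OF fM]) (auto simp: mult.commute)
  have "measure_pmf.expectation (bind_pmf M N) f = (\<Sum>a\<in>S. pmf (bind_pmf M N) a *\<^sub>R f a)"
    by (rule integral_measure_pmf[OF fS]) (simp add: S_def)
  also have "\<dots> = (\<Sum>a\<in>S. \<Sum>x\<in>set_pmf M. (pmf M x * pmf (N x) a) *\<^sub>R f a)"
    by (simp add: pb scaleR_sum_left)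
  also have "\<dots> = (\<Sum>x\<in>set_pmf M. \<Sum>a\<in>S. (pmf M x * pmf (N x) a) *\<^sub>R f a)"
    by (rule sum.swap)
  also have "\<dots> = (\<Sum>x\<in>set_pmf M. pmf M x *\<^sub>R measure_pmf.expectation (N x) f)"
  proof (rule sum.cong[OF refl])
    fix x assume x: "x \<in> set_pmf M"
    have "measure_pmf.expectation (N x) f = (\<Sum>a\<in>S. pmf (N x) a *\<^sub>R f a)"
      by (rule integral_measure_pmf[OF fS]) (use x in \<open>auto simp: S_def\<close>)
    then show "(\<Sum>a\<in>S. (pmf M x * pmf (N x) a) *\<^sub>R f a) = pmf M x *\<^sub>R measure_pmf.expectation (N x) f"
      by (simp add: scaleR_sum_right)
  qed
  also have "\<dots> = measure_pmf.expectation M (\<lambda>x. measure_pmf.expectation (N x) f)"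
    by (rule integral_measure_pmf[OF fM, symmetric]) simp
  finally show ?thesis .
qed

lemma expect_block:
  fixes A :: "real^'n^'m" and g :: "'m set \<times> 'n set \<Rightarrow> real^'n"
  assumes A: "A \<noteq> 0" and RP: "partition_on UNIV RP" and CP: "partition_on UNIV CP"
  shows "measure_pmf.expectation (block_pmf A RP CP) g
       = (\<Sum>I\<in>RP. \<Sum>J\<in>CP. (block_frob2 A I J / (frob_norm A)^2) *\<^sub>R g (I,J))"
proof -
  have "measure_pmf.expectation (block_pmf A RP CP) g = (\<Sum>p\<in>RP \<times> CP. pmf (block_pmf A RP CP) p *\<^sub>R g p)"
  proof (rule integral_measure_pmf)
    show "finite (RP \<times> CP)" by simp
    fix p assume "p \<in> set_pmf (block_pmf A RP CP)"
    then have "pmf (block_pmf A RP CP) p \<noteq> 0" by (simp add: set_pmf_eq)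
    then show "p \<in> RP \<times> CP" using block_pmf_pmf[OF A RP CP, of "fst p" "snd p"]
      by (cases p) (auto split: if_splits)
  qed
  also have "\<dots> = (\<Sum>I\<in>RP. \<Sum>J\<in>CP. (block_frob2 A I J / (frob_norm A)^2) *\<^sub>R g (I,J))"
    by (simp only: sum.cartesian_product) (intro sum.cong refl, clarsimp simp: block_pmf_pmf[OF A RP CP])
  finally show ?thesis .
qed

lemma mean_step:
  fixes A :: "real^'n^'m"
  assumes A: "A \<noteq> 0" and RP: "partition_on UNIV RP" and CP: "partition_on UNIV CP"
  shows "measure_pmf.expectation (block_pmf A RP CP) (\<lambda>(I,J). dsbgs_step A b \<alpha> x I J)
       = x - (\<alpha> / (frob_norm A)^2) *\<^sub>R (transpose A *v (A *v x - b))"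
proof -
  define F where "F = (frob_norm A)^2"
  have F: "F > 0" unfolding F_def using F2_pos[OF A] .
  define r where "r = A *v x - b"
  define S where "S I j = (\<Sum>i\<in>I. A$i$j * r$i)" for I j
  have comp: "(\<Sum>I\<in>RP. \<Sum>J\<in>CP. (block_frob2 A I J / F) *\<^sub>R dsbgs_step A b \<alpha> x I J) $ j
        = x$j - (\<alpha> / F) * (transpose A *v r) $ j" for j
  proof -
    have blk: "(block_frob2 A I J / F) * (if j \<in> J then \<alpha> * S I j / block_frob2 A I J else 0)
             = (if j \<in> J then (\<alpha> / F) * S I j else 0)" if "I \<in> RP" for I J
    proof (cases "j \<in> J \<and> block_frob2 A I J = 0")
      case True
      then have "\<forall>i\<in>I. \<forall>j'\<in>J. (A$i$j')^2 = 0"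
        unfolding block_frob2_def
        by (subst (asm) sum_nonneg_eq_0_iff) (auto simp: sum_nonneg_eq_0_iff sum_nonneg)
      then have "S I j = 0" using True unfolding S_def by auto
      then show ?thesis using True by simp
    qed auto
    have one: "(\<Sum>J\<in>CP. if j \<in> J then (1::real) else 0) = 1"
    proof -
      have "(\<Sum>J\<in>CP. \<Sum>j'\<in>J. if j' = j then (1::real) else 0) = (\<Sum>j'\<in>UNIV. if j' = j then 1 else 0)"
        by (rule part_sum[OF CP])
      then show ?thesis by simp
    qed
    have "(\<Sum>I\<in>RP. \<Sum>J\<in>CP. (block_frob2 A I J / F) *\<^sub>R dsbgs_step A b \<alpha> x I J) $ j
        = (\<Sum>I\<in>RP. \<Sum>J\<in>CP. (block_frob2 A I J / F) * x$j
             - (block_frob2 A I J / F) * (if j \<in> J then \<alpha> * S I j / block_frob2 A I J else 0))"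
      unfolding S_def r_def by (simp add: sum_component dsbgs_step_def right_diff_distrib)
    also have "\<dots> = (\<Sum>I\<in>RP. \<Sum>J\<in>CP. (block_frob2 A I J / F) * x$j)
             - (\<Sum>I\<in>RP. \<Sum>J\<in>CP. if j \<in> J then (\<alpha> / F) * S I j else 0)"
    proof -
      have "(\<Sum>I\<in>RP. \<Sum>J\<in>CP. (block_frob2 A I J / F) * (if j \<in> J then \<alpha> * S I j / block_frob2 A I J else 0))
          = (\<Sum>I\<in>RP. \<Sum>J\<in>CP. if j \<in> J then (\<alpha> / F) * S I j else 0)"
        by (intro sum.cong refl blk)
      then show ?thesis by (simp only: sum_subtractf)
    qed
    also have "(\<Sum>I\<in>RP. \<Sum>J\<in>CP. (block_frob2 A I J / F) * x$j) = x$j"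
    proof -
      have "(\<Sum>I\<in>RP. \<Sum>J\<in>CP. (block_frob2 A I J / F) * x$j) = (\<Sum>I\<in>RP. \<Sum>J\<in>CP. block_frob2 A I J) / F * x$j"
        by (simp add: sum_distrib_right sum_divide_distrib)
      also have "\<dots> = x$j" using F by (simp add: block_frob2_def blocks_sum[OF RP CP] F_def F2_eq)
      finally show ?thesis .
    qed
    also have "(\<Sum>I\<in>RP. \<Sum>J\<in>CP. if j \<in> J then (\<alpha> / F) * S I j else 0)
             = (\<Sum>I\<in>RP. (\<alpha> / F) * S I j * (\<Sum>J\<in>CP. if j \<in> J then (1::real) else 0))"
      by (simp add: sum_distrib_left if_distrib cong: if_cong)
    also have "\<dots> = (\<alpha> / F) * (\<Sum>I\<in>RP. \<Sum>i\<in>I. A$i$j * r$i)"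
      by (simp add: one S_def sum_distrib_left)
    also have "\<dots> = (\<alpha> / F) * (transpose A *v r) $ j"
      by (simp add: part_sum[OF RP] matrix_vector_mult_def transpose_def)
    finally show ?thesis .
  qed
  have "measure_pmf.expectation (block_pmf A RP CP) (\<lambda>(I,J). dsbgs_step A b \<alpha> x I J)
     = (\<Sum>I\<in>RP. \<Sum>J\<in>CP. (block_frob2 A I J / F) *\<^sub>R dsbgs_step A b \<alpha> x I J)"
    unfolding expect_block[OF A RP CP] F_def by simp
  also have "\<dots> = x - (\<alpha> / F) *\<^sub>R (transpose A *v r)"
    unfolding vec_eq_iff by (simp only: comp vector_minus_component vector_scaleR_component) simp
  finally show ?thesis unfolding F_def r_def .
qed


lemma expect_diff_const:
  fixes f :: "'b \<Rightarrow> real^'n"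
  assumes "finite (set_pmf M)"
  shows "measure_pmf.expectation M (\<lambda>x. f x - c) = measure_pmf.expectation M f - c"
proof -
  have "measure_pmf.expectation M (\<lambda>x. f x - c) = measure_pmf.expectation M f - measure_pmf.expectation M (\<lambda>x. c)"
    by (rule Bochner_Integration.integral_diff) (use assms integrable_measure_pmf_finite in auto)
  then show ?thesis by simp
qed

lemma dsbgs_finite: "finite (set_pmf (dsbgs_dist A b RP CP \<alpha> x0 k))"
  by (induction k) auto

theorem theorem1:
  fixes A :: "real^'n^'m" and b :: "real^'m" and x0 :: "real^'n"
    and RP :: "'m set set" and CP :: "'n set set" and \<alpha> :: real and k :: nat
  assumes "A \<noteq> 0"
    and "b \<in> range (\<lambda>x. A *v x)"
    and "partition_on UNIV RP" and "partition_on UNIV CP"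
    and "\<alpha> > 0"
  defines "x0s \<equiv> (mat 1 - pinv A ** A) *v x0 + pinv A *v b"
  shows "norm (measure_pmf.expectation (dsbgs_dist A b RP CP \<alpha> x0 k) (\<lambda>x. x - x0s))
           \<le> (Max ((\<lambda>\<sigma>. \<bar>1 - \<alpha> * \<sigma>^2 / (frob_norm A)^2\<bar>) ` nonzero_singular_values A)) ^ k
              * norm (x0 - x0s)"
proof -
  note A = assms(1) and RP = assms(3) and CP = assms(4)
  define F where "F = (frob_norm A)^2"
  have Fpos: "F > 0" unfolding F_def using F2_pos[OF A] .
  define \<gamma> where "\<gamma> = \<alpha> / F"
  have g0: "\<gamma> \<noteq> 0" unfolding \<gamma>_def using Fpos assms(5) by simp
  define V where "V = range (\<lambda>y. transpose A *v y)"
  have sV: "subspace V" unfolding V_def by (rule subV)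
  define T where "T v = v - \<gamma> *\<^sub>R (transpose A *v (A *v v))" for v
  define X where "X = pinv A"
  have pen: "A ** X ** A = A" "X ** A ** X = X" "transpose (A ** X) = A ** X" "transpose (X ** A) = X ** A"
    using pinv_penrose[of A] unfolding X_def penrose_def by auto
  obtain z where z: "b = A *v z" using assms(2) by blast
  have x0s: "x0s = x0 - (X ** A) *v x0 + X *v b"
    unfolding x0s_def X_def by (simp add: matrix_vector_mult_diff_rdistrib)
  have Ax0s: "A *v x0s = b"
  proof -
    have "A *v x0s = A *v x0 - (A ** X ** A) *v x0 + (A ** X ** A) *v z"
      unfolding x0s z by (simp add: matrix_vector_right_distrib matrix_vector_mult_diff_distrib matrix_vector_mul_assoc matrix_mul_assoc)
    then show ?thesis using pen(1) z by simp
  qed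
  have e0V: "x0 - x0s \<in> V"
  proof -
    have "x0 - x0s = X *v (A *v x0 - b)"
      unfolding x0s by (simp add: matrix_vector_mult_diff_distrib matrix_vector_mul_assoc)
    also have "X = transpose A ** (transpose X ** X)"
    proof -
      have "X = transpose (X ** A) ** X" using pen(2) pen(4) by simp
      also have "\<dots> = transpose A ** (transpose X ** X)" by (simp add: matrix_transpose_mul matrix_mul_assoc)
      finally show ?thesis .
    qed
    finally have "x0 - x0s = transpose A *v ((transpose X ** X) *v (A *v x0 - b))"
      by (simp add: matrix_vector_mul_assoc)
    then show ?thesis unfolding V_def by blast
  qed
  have inV: "transpose A *v y \<in> V" for y unfolding V_def by blast
  have TV: "T v \<in> V" if "v \<in> V" for v
    unfolding T_def using that inV sV by (simp add: subspace_diff subspace_scale)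
  have Teq: "T = (\<lambda>v. v - \<gamma> *\<^sub>R ((transpose A ** A) *v v))"
    by (simp add: T_def matrix_vector_mul_assoc fun_eq_iff)
  have blT: "bounded_linear T"
    unfolding Teq by (rule bounded_linear_sub[OF bounded_linear_ident
        bounded_linear_compose[OF bounded_linear_scaleR_right matrix_vector_mul_bounded_linear]])
  define e where "e k = measure_pmf.expectation (dsbgs_dist A b RP CP \<alpha> x0 k) (\<lambda>x. x - x0s)" for k
  have e0: "e 0 = x0 - x0s" unfolding e_def by simp
  have erec: "e (Suc k) = T (e k)" for k
  proof -
    have inner: "measure_pmf.expectation (map_pmf (\<lambda>(I,J). dsbgs_step A b \<alpha> x I J) (block_pmf A RP CP)) (\<lambda>y. y - x0s)
          = T (x - x0s)" for x
    proof -
      have "measure_pmf.expectation (map_pmf (\<lambda>(I,J). dsbgs_step A b \<alpha> x I J) (block_pmf A RP CP)) (\<lambda>y. y - x0s)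
          = measure_pmf.expectation (block_pmf A RP CP) (\<lambda>p. (case p of (I,J) \<Rightarrow> dsbgs_step A b \<alpha> x I J) - x0s)"
        by simp
      also have "\<dots> = measure_pmf.expectation (block_pmf A RP CP) (\<lambda>(I,J). dsbgs_step A b \<alpha> x I J) - x0s"
        by (rule expect_diff_const) simp
      also have "\<dots> = x - \<gamma> *\<^sub>R (transpose A *v (A *v x - b)) - x0s"
        unfolding mean_step[OF A RP CP] \<gamma>_def F_def ..
      also have "\<dots> = T (x - x0s)"
        unfolding T_def using Ax0s by (simp add: matrix_vector_mult_diff_distrib algebra_simps)
      finally show ?thesis .
    qed
    have "e (Suc k) = measure_pmf.expectation (dsbgs_dist A b RP CP \<alpha> x0 k)
        (\<lambda>x. measure_pmf.expectation (map_pmf (\<lambda>(I,J). dsbgs_step A b \<alpha> x I J) (block_pmf A RP CP)) (\<lambda>y. y - x0s))"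
      unfolding e_def dsbgs_dist.simps by (rule expect_bind) (auto simp: dsbgs_finite)
    also have "\<dots> = measure_pmf.expectation (dsbgs_dist A b RP CP \<alpha> x0 k) (\<lambda>x. T (x - x0s))"
      by (simp only: inner)
    also have "\<dots> = T (e k)"
      unfolding e_def by (rule integral_bounded_linear[OF blT integrable_measure_pmf_finite[OF dsbgs_finite]])
    finally show ?thesis .
  qed
  have eV: "e k \<in> V" for k
  proof (induction k)
    case 0 show ?case using e0 e0V by simp
  next
    case (Suc k) then show ?case using erec TV by simp
  qed
  have ne: "\<exists>v\<in>V. v \<noteq> 0"
  proof (rule ccontr)
    assume "\<not> ?thesis"
    then have "\<forall>y. transpose A *v y = 0 *v y" using inV by auto
    then have "transpose A = 0" using matrix_eq by blast
    then have "A = transpose (0::real^'m^'n)" by (metis transpose_transpose)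
    moreover have "transpose (0::real^'m^'n) = 0" by (simp add: transpose_def vec_eq_iff)
    ultimately show False using A by simp
  qed
  obtain \<sigma> where sv: "\<sigma> \<in> nonzero_singular_values A"
     and bnd: "\<And>v. v \<in> V \<Longrightarrow> norm (T v) \<le> \<bar>1 - \<gamma> * \<sigma>^2\<bar> * norm v"
    using key_bound[OF g0, of A] ne unfolding V_def T_def by blast
  define c where "c = \<bar>1 - \<gamma> * \<sigma>^2\<bar>"
  define \<rho> where "\<rho> = Max ((\<lambda>\<sigma>. \<bar>1 - \<alpha> * \<sigma>^2 / (frob_norm A)^2\<bar>) ` nonzero_singular_values A)"
  have "c \<in> (\<lambda>\<sigma>. \<bar>1 - \<alpha> * \<sigma>^2 / (frob_norm A)^2\<bar>) ` nonzero_singular_values A"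
    using sv unfolding c_def \<gamma>_def F_def by (auto intro!: image_eqI[of _ _ \<sigma>])
  then have c\<rho>: "c \<le> \<rho>" unfolding \<rho>_def using sv_finite by (intro Max_ge) auto
  have c0: "0 \<le> c" unfolding c_def by simp
  have "norm (e k) \<le> \<rho>^k * norm (x0 - x0s)"
  proof (induction k)
    case 0 then show ?case by (simp add: e0)
  next
    case (Suc k)
    have "norm (e (Suc k)) \<le> c * norm (e k)" unfolding erec c_def by (rule bnd[OF eV])
    also have "\<dots> \<le> \<rho> * (\<rho>^k * norm (x0 - x0s))"
      using Suc c\<rho> c0 by (intro mult_mono) auto
    finally show ?case by (simp add: mult.assoc)
  qed
  then show ?thesis unfolding e_def \<rho>_def .
qed


end
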